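(* Assume the setting described in the context. For any word $W$ over $F$ there exists a sequence of valid swaps transforming $W$ into a $\pi$-stable word.
   Context: Setting: $F$ is a finite set with a symmetric relation $\sim$ (loops allowed), $\Gamma(f)=\{g:f\sim g\}$, $\Gamma^+(f)=\Gamma(f)\cup\{f\}$ and $\Gamma^+(S)=\bigcup_{f\in S}\Gamma^+(f)$. Write $f\cong g$ if $f\sim g$ or $f=g$. $S\subseteq F$ is independent if $f\not\sim g$ for distinct $f,g\in S$; $\mathrm{Ind}(F)$ is the family of independent sets. $\pi$ is a permutation of $F$ inducing a total order $\preceq_\pi$. A word is a finite sequence of elements of $F$. A valid swap on a word replaces two adjacent letters $fg$ by $gf$, provided $f\not\cong g$. A sequence $(I_1,\ldots,I_s)$, $s\ge1$, is stable if $I_r\in\mathrm{Ind}(F)$ and $I_{r+1}\subseteq\Gamma^+(I_r)$ for $r\in[s-1]$. A word $W$ is stable if it can be partitioned as $W=W_1\ldots W_s$ into nonempty words, each consisting of distinct letters, such that $(I_1,\ldots,I_s)$ is stable, where $I_r$ is the set of letters of $W_r$. It is $\pi$-stable if in addition each $W_r$ is strictly $\prec_\pi$-increasing. The empty word is regarded as $\pi$-stable. *)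

theory Defs
  imports Main
begin

text \<open>Setting: ground set F (type 'a carrier), symmetric relation R (the relation ~),
  and pi :: 'a => nat injective on F encoding the total order induced by the permutation.\<close>

definition cong_rel :: "('a \<Rightarrow> 'a \<Rightarrow> bool) \<Rightarrow> 'a \<Rightarrow> 'a \<Rightarrow> bool" where
  "cong_rel R f g \<longleftrightarrow> R f g \<or> f = g"

definition Gamma :: "'a set \<Rightarrow> ('a \<Rightarrow> 'a \<Rightarrow> bool) \<Rightarrow> 'a \<Rightarrow> 'a set" where
  "Gamma F R f = {g \<in> F. R f g}"

definition Gamma_plus :: "'a set \<Rightarrow> ('a \<Rightarrow> 'a \<Rightarrow> bool) \<Rightarrow> 'a \<Rightarrow> 'a set" where
  "Gamma_plus F R f = Gamma F R f \<union> {f}"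

definition Gamma_plus_set :: "'a set \<Rightarrow> ('a \<Rightarrow> 'a \<Rightarrow> bool) \<Rightarrow> 'a set \<Rightarrow> 'a set" where
  "Gamma_plus_set F R S = (\<Union>f\<in>S. Gamma_plus F R f)"

definition independent :: "'a set \<Rightarrow> ('a \<Rightarrow> 'a \<Rightarrow> bool) \<Rightarrow> 'a set \<Rightarrow> bool" where
  "independent F R S \<longleftrightarrow> S \<subseteq> F \<and> (\<forall>f\<in>S. \<forall>g\<in>S. f \<noteq> g \<longrightarrow> \<not> R f g)"

definition Ind :: "'a set \<Rightarrow> ('a \<Rightarrow> 'a \<Rightarrow> bool) \<Rightarrow> 'a set set" where
  "Ind F R = {S. independent F R S}"

definition valid_swap :: "('a \<Rightarrow> 'a \<Rightarrow> bool) \<Rightarrow> 'a list \<Rightarrow> 'a list \<Rightarrow> bool" where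
  "valid_swap R W W' \<longleftrightarrow>
     (\<exists>u f g v. W = u @ [f, g] @ v \<and> W' = u @ [g, f] @ v \<and> \<not> cong_rel R f g)"

definition stable_seq :: "'a set \<Rightarrow> ('a \<Rightarrow> 'a \<Rightarrow> bool) \<Rightarrow> 'a set list \<Rightarrow> bool" where
  "stable_seq F R Is \<longleftrightarrow> Is \<noteq> [] \<and> (\<forall>I\<in>set Is. I \<in> Ind F R) \<and>
     (\<forall>r. Suc r < length Is \<longrightarrow> Is ! Suc r \<subseteq> Gamma_plus_set F R (Is ! r))"

definition stable_word :: "'a set \<Rightarrow> ('a \<Rightarrow> 'a \<Rightarrow> bool) \<Rightarrow> 'a list \<Rightarrow> bool" where
  "stable_word F R W \<longleftrightarrow> (\<exists>Ws. W = concat Ws \<and>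
     (\<forall>w\<in>set Ws. w \<noteq> [] \<and> distinct w) \<and> stable_seq F R (map set Ws))"

definition pi_stable_word :: "'a set \<Rightarrow> ('a \<Rightarrow> 'a \<Rightarrow> bool) \<Rightarrow> ('a \<Rightarrow> nat) \<Rightarrow> 'a list \<Rightarrow> bool" where
  "pi_stable_word F R \<pi> W \<longleftrightarrow> W = [] \<or> (\<exists>Ws. W = concat Ws \<and>
     (\<forall>w\<in>set Ws. w \<noteq> [] \<and> distinct w \<and> sorted_wrt (\<lambda>x y. \<pi> x < \<pi> y) w) \<and>
     stable_seq F R (map set Ws))"

end

theory Submission
  imports Defs
begin

definition blocks :: "'a set \<Rightarrow> ('a \<Rightarrow> 'a \<Rightarrow> bool) \<Rightarrow> ('a \<Rightarrow> nat) \<Rightarrow> 'a list list \<Rightarrow> bool" where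
  "blocks F R \<pi> Ws \<longleftrightarrow> (\<forall>w\<in>set Ws. w \<noteq> [] \<and> distinct w \<and> sorted_wrt (\<lambda>x y. \<pi> x < \<pi> y) w) \<and>
     stable_seq F R (map set Ws)"

lemma vs_ctx: "valid_swap R X Y \<Longrightarrow> valid_swap R (u@X@v) (u@Y@v)"
  unfolding valid_swap_def
  by (metis append.assoc)

lemma rt_ctx: "(valid_swap R)\<^sup>*\<^sup>* X Y \<Longrightarrow> (valid_swap R)\<^sup>*\<^sup>* (u@X@v) (u@Y@v)"
proof (induction rule: rtranclp_induct)
  case base then show ?case by simp
next
  case (step y z) then show ?case by (meson rtranclp.rtrancl_into_rtrancl vs_ctx)
qed

lemma move_left: "\<forall>x\<in>set X. \<not> cong_rel R x f \<Longrightarrow> (valid_swap R)\<^sup>*\<^sup>* (X@[f]) (f#X)"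
proof (induction X)
  case Nil then show ?case by simp
next
  case (Cons x X)
  have 1: "(valid_swap R)\<^sup>*\<^sup>* ([x]@(X@[f])@[]) ([x]@(f#X)@[])"
    using Cons by (intro rt_ctx) auto
  have 2: "valid_swap R ([]@[x,f]@X) ([]@[f,x]@X)"
    unfolding valid_swap_def
    by (rule exI[of _ "[]"], rule exI[of _ x], rule exI[of _ f], rule exI[of _ X]) (use Cons.prems in simp)
  show ?case using 1 2 by (simp add: rtranclp.rtrancl_into_rtrancl)
qed

lemma insort_steps: "\<forall>x\<in>set w. \<not> cong_rel R x f \<Longrightarrow> (valid_swap R)\<^sup>*\<^sup>* (w@[f]) (insort_key \<pi> f w)"
proof (induction w)
  case Nil then show ?case by simp
next
  case (Cons x xs)
  show ?case
  proof (cases "\<pi> f \<le> \<pi> x")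
    case True then show ?thesis using move_left[OF Cons.prems] by simp
  next
    case False
    have "(valid_swap R)\<^sup>*\<^sup>* ([x]@(xs@[f])@[]) ([x]@(insort_key \<pi> f xs)@[])"
      using Cons by (intro rt_ctx) auto
    then show ?thesis using False by simp
  qed
qed

lemma insort_sorted: "sorted_wrt (\<lambda>x y. \<pi> x < \<pi> y) w \<Longrightarrow> \<forall>x\<in>set w. \<pi> x \<noteq> \<pi> f
  \<Longrightarrow> sorted_wrt (\<lambda>x y. \<pi> x < \<pi> y) (insort_key \<pi> f w)"
proof (induction w)
  case Nil then show ?case by simp
next
  case (Cons x xs)
  then show ?case by (auto simp: set_insort_key order_le_less)
qed

lemma stable_seq_snoc: "stable_seq F R (Is@[I]) \<longleftrightarrow> I \<in> Ind F R \<and>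
   (Is = [] \<or> (stable_seq F R Is \<and> I \<subseteq> Gamma_plus_set F R (last Is)))"
proof (cases "Is = []")
  case True then show ?thesis by (simp add: stable_seq_def)
next
  case False
  show ?thesis
  proof
    assume A: "stable_seq F R (Is@[I])"
    have "Is ! (length Is - 1) = last Is" using False by (simp add: last_conv_nth)
    moreover have "I \<subseteq> Gamma_plus_set F R ((Is@[I]) ! (length Is - 1))"
    proof -
      have r: "Suc (length Is - 1) < length (Is@[I])" "Suc (length Is - 1) = length Is"
        using False by auto
      have "(Is@[I]) ! Suc (length Is - 1) \<subseteq> Gamma_plus_set F R ((Is@[I]) ! (length Is - 1))"
        using A r(1) unfolding stable_seq_def by blast
      then show ?thesis unfolding r(2) by simp
    qed
    moreover have "(Is@[I]) ! (length Is - 1) = Is ! (length Is - 1)"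
      using False by (simp add: nth_append)
    moreover have "stable_seq F R Is"
      unfolding stable_seq_def
    proof (intro conjI allI impI)
      show "Is \<noteq> []" by fact
      show "\<forall>I\<in>set Is. I \<in> Ind F R" using A unfolding stable_seq_def by auto
      fix r assume r: "Suc r < length Is"
      then have "(Is@[I]) ! Suc r \<subseteq> Gamma_plus_set F R ((Is@[I]) ! r)"
        using A unfolding stable_seq_def by simp
      then show "Is ! Suc r \<subseteq> Gamma_plus_set F R (Is ! r)" using r by (simp add: nth_append)
    qed
    ultimately show "I \<in> Ind F R \<and> (Is = [] \<or> (stable_seq F R Is \<and> I \<subseteq> Gamma_plus_set F R (last Is)))"
      using A unfolding stable_seq_def by auto
  next
    assume B: "I \<in> Ind F R \<and> (Is = [] \<or> (stable_seq F R Is \<and> I \<subseteq> Gamma_plus_set F R (last Is)))"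
    then have S: "stable_seq F R Is" "I \<subseteq> Gamma_plus_set F R (last Is)" using False by auto
    show "stable_seq F R (Is@[I])"
      unfolding stable_seq_def
    proof (intro conjI allI impI)
      show "Is @ [I] \<noteq> []" by simp
      show "\<forall>I\<in>set (Is @ [I]). I \<in> Ind F R" using B S unfolding stable_seq_def by auto
      fix r assume r: "Suc r < length (Is @ [I])"
      show "(Is @ [I]) ! Suc r \<subseteq> Gamma_plus_set F R ((Is @ [I]) ! r)"
      proof (cases "Suc r < length Is")
        case True then show ?thesis using S unfolding stable_seq_def by (simp add: nth_append)
      next
        case F2: False
        then have "Suc r = length Is" using r by simp
        then have rr: "r = length Is - 1" by simp
        show ?thesis using S False \<open>Suc r = length Is\<close>
          by (simp add: nth_append last_conv_nth rr)
      qed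
    qed
  qed
qed



definition conf :: "('a \<Rightarrow> 'a \<Rightarrow> bool) \<Rightarrow> 'a \<Rightarrow> 'a \<Rightarrow> bool" where
  "conf R f g \<longleftrightarrow> R f g \<or> R g f \<or> f = g"

lemma conf_gp:
  assumes sym: "\<forall>f\<in>F. \<forall>g\<in>F. R f g \<longrightarrow> R g f" and "f \<in> F" "g \<in> F" "conf R f g" "g \<in> S"
  shows "f \<in> Gamma_plus_set F R S"
  using assms unfolding conf_def Gamma_plus_set_def Gamma_plus_def Gamma_def by blast

lemma gp_mono: "S \<subseteq> T \<Longrightarrow> Gamma_plus_set F R S \<subseteq> Gamma_plus_set F R T"
  unfolding Gamma_plus_set_def by blast

lemma ind_sub: "I \<in> Ind F R \<Longrightarrow> I \<subseteq> F"
  unfolding Ind_def independent_def by blast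

lemma blocks_snoc: "blocks F R \<pi> (Ws@[w]) \<longleftrightarrow> w \<noteq> [] \<and> distinct w \<and> sorted_wrt (\<lambda>x y. \<pi> x < \<pi> y) w
   \<and> set w \<in> Ind F R \<and> (Ws = [] \<or> (blocks F R \<pi> Ws \<and> set w \<subseteq> Gamma_plus_set F R (set (last Ws))))"
proof -
  have "stable_seq F R (map set (Ws@[w])) = stable_seq F R (map set Ws @ [set w])" by simp
  then show ?thesis
    unfolding blocks_def stable_seq_snoc
    by (auto simp: last_map)
qed

lemma insert_lemma:
  assumes sym: "\<forall>f\<in>F. \<forall>g\<in>F. R f g \<longrightarrow> R g f" and inj: "inj_on \<pi> F" and fF: "f \<in> F"
  shows "blocks F R \<pi> Ws \<Longrightarrow> Ws \<noteq> [] \<Longrightarrow> \<exists>Ws'. blocks F R \<pi> Ws' \<and>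
     (valid_swap R)\<^sup>*\<^sup>* (concat Ws @ [f]) (concat Ws') \<and>
     ((\<forall>g\<in>set (last Ws). \<not> conf R f g) \<longrightarrow> set (last Ws) \<subseteq> set (last Ws'))"
proof (induction Ws rule: rev_induct)
  case Nil then show ?case by simp
next
  case (snoc w Ws0)
  have B: "w \<noteq> []" "distinct w" "sorted_wrt (\<lambda>x y. \<pi> x < \<pi> y) w" "set w \<in> Ind F R"
    "Ws0 = [] \<or> (blocks F R \<pi> Ws0 \<and> set w \<subseteq> Gamma_plus_set F R (set (last Ws0)))"
    using snoc.prems(1) unfolding blocks_snoc by auto
  have wF: "set w \<subseteq> F" using B(4) by (rule ind_sub)
  show ?case
  proof (cases "\<exists>g\<in>set w. conf R f g")
    case True
    then obtain g where g: "g \<in> set w" "conf R f g" by blast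
    have "blocks F R \<pi> ((Ws0@[w])@[[f]])"
      unfolding blocks_snoc
      using snoc.prems(1) B fF conf_gp[OF sym fF _ g(2) g(1)] wF g(1)
      by (auto simp: Ind_def independent_def subsetD)
    then show ?thesis using True by (intro exI[of _ "(Ws0@[w])@[[f]]"]) auto
  next
    case False
    then have nc: "\<forall>x\<in>set w. \<not> cong_rel R x f" unfolding conf_def cong_rel_def by auto
    show ?thesis
    proof (cases "Ws0 = [] \<or> (\<exists>g\<in>set (last Ws0). conf R f g)")
      case True
      let ?v = "insort_key \<pi> f w"
      have fw: "f \<notin> set w" using False unfolding conf_def by auto
      have pi: "\<forall>x\<in>set w. \<pi> x \<noteq> \<pi> f" using fw inj wF fF by (metis inj_on_eq_iff subsetD)
      have ind: "set ?v \<in> Ind F R"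
        using B(4) fF False unfolding Ind_def independent_def conf_def
        by (auto simp: set_insort_key)
      have gp: "Ws0 \<noteq> [] \<Longrightarrow> set ?v \<subseteq> Gamma_plus_set F R (set (last Ws0))"
      proof -
        assume ne: "Ws0 \<noteq> []"
        then obtain g where g: "g \<in> set (last Ws0)" "conf R f g" using True by blast
        have "blocks F R \<pi> Ws0" using B(5) ne by auto
        then have "set (last Ws0) \<in> Ind F R"
          using ne unfolding blocks_def stable_seq_def by (auto simp: last_map)
        then have "g \<in> F" using g(1) ind_sub by blast
        then have "f \<in> Gamma_plus_set F R (set (last Ws0))" using conf_gp[OF sym fF _ g(2) g(1)] by blast
        then show ?thesis using B(5) ne by (auto simp: set_insort_key)
      qed
      have "blocks F R \<pi> (Ws0@[?v])"
        unfolding blocks_snoc using B fw pi ind gp insort_sorted[OF B(3) pi]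
        by (auto simp: distinct_insort)
      moreover have "(valid_swap R)\<^sup>*\<^sup>* (concat Ws0 @ (w @ [f]) @ []) (concat Ws0 @ ?v @ [])"
        by (rule rt_ctx[OF insort_steps[OF nc]])
      ultimately show ?thesis
        by (intro exI[of _ "Ws0@[?v]"]) (auto simp: set_insort_key)
    next
      case F2: False
      then have ne: "Ws0 \<noteq> []" and bl: "blocks F R \<pi> Ws0"
        and sub: "set w \<subseteq> Gamma_plus_set F R (set (last Ws0))" using B(5) by auto
      obtain Ws0' where W': "blocks F R \<pi> Ws0'" "(valid_swap R)\<^sup>*\<^sup>* (concat Ws0 @ [f]) (concat Ws0')"
        "set (last Ws0) \<subseteq> set (last Ws0')"
        using snoc.IH[OF bl ne] F2 by blast
      have ne': "Ws0' \<noteq> []" using W'(1) unfolding blocks_def stable_seq_def by auto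
      have "blocks F R \<pi> (Ws0'@[w])"
        unfolding blocks_snoc using B W'(1) sub gp_mono[OF W'(3)] by blast
      moreover have "(valid_swap R)\<^sup>*\<^sup>* (concat Ws0 @ (w @ [f]) @ []) (concat Ws0 @ (f # w) @ [])"
        by (rule rt_ctx[OF move_left[OF nc]])
      moreover have "(valid_swap R)\<^sup>*\<^sup>* ([] @ (concat Ws0 @ [f]) @ w) ([] @ concat Ws0' @ w)"
        by (rule rt_ctx[OF W'(2)])
      ultimately show ?thesis
        by (intro exI[of _ "Ws0'@[w]"]) auto
    qed
  qed
qed

theorem lemma4:
  fixes F :: "'a set" and R :: "'a \<Rightarrow> 'a \<Rightarrow> bool" and \<pi> :: "'a \<Rightarrow> nat"
    and W :: "'a list"
  assumes "finite F"
    and "\<forall>f\<in>F. \<forall>g\<in>F. R f g \<longrightarrow> R g f"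
    and "inj_on \<pi> F"
    and "set W \<subseteq> F"
  shows "\<exists>W'. (valid_swap R)\<^sup>*\<^sup>* W W' \<and> pi_stable_word F R \<pi> W'"
  using assms(4)
proof (induction W rule: rev_induct)
  case Nil then show ?case by (auto simp: pi_stable_word_def)
next
  case (snoc f W0)
  then obtain V where V: "(valid_swap R)\<^sup>*\<^sup>* W0 V" "pi_stable_word F R \<pi> V" by auto
  have fF: "f \<in> F" using snoc.prems by auto
  have st: "(valid_swap R)\<^sup>*\<^sup>* (W0 @ [f] @ []) (V @ [f] @ [])"
    using rt_ctx[OF V(1), of "[]" "[f]"] by simp
  show ?case
  proof (cases "V = []")
    case True
    have "blocks F R \<pi> ([]@[[f]])" unfolding blocks_snoc using fF
      by (auto simp: Ind_def independent_def)
    then have "pi_stable_word F R \<pi> [f]" unfolding pi_stable_word_def blocks_def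
      by (intro disjI2 exI[of _ "[[f]]"]) auto
    then show ?thesis using st True by auto
  next
    case False
    then obtain Ws where Ws: "V = concat Ws" "blocks F R \<pi> Ws"
      using V(2) unfolding pi_stable_word_def blocks_def by blast
    have ne: "Ws \<noteq> []" using Ws(2) unfolding blocks_def stable_seq_def by auto
    obtain Ws' where "blocks F R \<pi> Ws'" "(valid_swap R)\<^sup>*\<^sup>* (concat Ws @ [f]) (concat Ws')"
      using insert_lemma[OF assms(2) assms(3) fF Ws(2) ne] by blast
    moreover then have "pi_stable_word F R \<pi> (concat Ws')"
      unfolding pi_stable_word_def blocks_def by blast
    ultimately show ?thesis using st Ws(1)
      by (metis append_Nil2 rtranclp_trans)
  qed
qed

end
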